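(* Let $\mathcal{W}$, $\sigma$, $m$, $\mathcal{L}_m=\{\mathbb{R}^d;g_i;p_i:i\in\{1,\dots,N\}^m\}$, $S_i$ and $\mu_m^*$ be as follows: $\mathcal{W}=\{\mathbb{R}^d;f_1,\dots,f_N;p_1,\dots,p_N\}$ is a weighted IFS with all $p_i>0$, $\sum p_i=1$, $s_i\|x-y\|\le\|f_i(x)-f_i(y)\|\le c_i\|x-y\|$ with $0<s_i\le c_i<1$, satisfying the strong open set condition with open set $U$; $\sigma\in\{1,\dots,N\}^*$ is a word with $f_\sigma(A_\mathcal{W})\subset U$; $g_i=f_i\circ f_\sigma$, $S_i=s_is_\sigma$ for $i\in\{1,\dots,N\}^m$; and $\mu_m^*$ is the invariant measure of $\mathcal{L}_m$. For $r\in(0,\infty)$ let $k_{m,r}\in(0,\infty)$ be the unique number with $\sum_{i\in\{1,\dots,N\}^m}(p_iS_i^r)^{\frac{k_{m,r}}{r+k_{m,r}}}=1$. Then for every $l_0\in(0,k_{m,r})$, $$\liminf_{n\to\infty}n\cdot e_{n,r}(\mu_m^* )^{l_0}>0,$$ and consequently $k_{m,r}\le\underline{D}_r(\mu_m^* )$.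
   Context: For a word $\tau=\tau_1\cdots\tau_k$: $f_\tau=f_{\tau_1}\circ\cdots\circ f_{\tau_k}$, $p_\tau=\prod p_{\tau_j}$, $s_\tau=\prod s_{\tau_j}$. $A_\mathcal{W}$ is the attractor of $\mathcal{W}$ (unique nonempty compact set with $A_\mathcal{W}=\bigcup f_i(A_\mathcal{W})$). SOSC: nonempty open $U$ with $f_i(U)\subset U$, $f_i(U)\cap f_j(U)=\emptyset$ for $i\ne j$, $U\cap A_\mathcal{W}\ne\emptyset$. Invariant measure of a weighted IFS $\{\theta_k;w_k\}$: unique Borel probability $\nu$ with $\nu=\sum_kw_k\nu\circ\theta_k^{-1}$. $V_{n,r}(\nu)=\inf\{\int\min_{a\in A}\|x-a\|^rd\nu(x):\operatorname{card}(A)\le n\}$, $e_{n,r}=V_{n,r}^{1/r}$, $\underline{D}_r(\nu)=\liminf_{n\to\infty}\frac{\log n}{-\log e_{n,r}(\nu)}$. *)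

theory Defs
  imports "HOL-Analysis.Analysis" "HOL-Probability.Probability"
begin

definition word_map :: "(nat \<Rightarrow> 'a \<Rightarrow> 'a) \<Rightarrow> nat list \<Rightarrow> 'a \<Rightarrow> 'a" where
  "word_map f \<tau> = foldr (\<lambda>i g. f i \<circ> g) \<tau> id"

definition word_prod :: "(nat \<Rightarrow> real) \<Rightarrow> nat list \<Rightarrow> real" where
  "word_prod p \<tau> = prod_list (map p \<tau>)"

definition words :: "nat \<Rightarrow> nat \<Rightarrow> nat list set" where
  "words N m = {w. length w = m \<and> set w \<subseteq> {1..N}}"

definition is_attractor :: "'i set \<Rightarrow> ('i \<Rightarrow> 'a::metric_space \<Rightarrow> 'a) \<Rightarrow> 'a set \<Rightarrow> bool" where
  "is_attractor I f K \<longleftrightarrow> compact K \<and> K \<noteq> {} \<and> K = (\<Union>i\<in>I. f i ` K)"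

definition SOSC_with :: "'i set \<Rightarrow> ('i \<Rightarrow> 'a::topological_space \<Rightarrow> 'a) \<Rightarrow> 'a set \<Rightarrow> 'a set \<Rightarrow> bool" where
  "SOSC_with I f A U \<longleftrightarrow> open U \<and> U \<noteq> {} \<and> (\<forall>i\<in>I. f i ` U \<subseteq> U)
     \<and> (\<forall>i\<in>I. \<forall>j\<in>I. i \<noteq> j \<longrightarrow> f i ` U \<inter> f j ` U = {}) \<and> U \<inter> A \<noteq> {}"

definition is_invariant_measure ::
  "'i set \<Rightarrow> ('i \<Rightarrow> 'a::topological_space \<Rightarrow> 'a) \<Rightarrow> ('i \<Rightarrow> real) \<Rightarrow> 'a measure \<Rightarrow> bool" where
  "is_invariant_measure I \<theta> w \<nu> \<longleftrightarrow> prob_space \<nu> \<and> sets \<nu> = sets borel \<and>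
     (\<forall>B\<in>sets borel. emeasure \<nu> B = (\<Sum>k\<in>I. ennreal (w k) * emeasure \<nu> (\<theta> k -` B)))"

definition quant_V :: "nat \<Rightarrow> real \<Rightarrow> 'a::real_normed_vector measure \<Rightarrow> ennreal" where
  "quant_V n r \<nu> = (INF A\<in>{A. finite A \<and> A \<noteq> {} \<and> card A \<le> n}.
      \<integral>\<^sup>+ x. ennreal (Min ((\<lambda>a. norm (x - a) powr r) ` A)) \<partial>\<nu>)"

definition quant_e :: "nat \<Rightarrow> real \<Rightarrow> 'a::real_normed_vector measure \<Rightarrow> real" where
  "quant_e n r \<nu> = enn2real (quant_V n r \<nu>) powr (1 / r)"

definition lower_quant_dim :: "real \<Rightarrow> 'a::real_normed_vector measure \<Rightarrow> ereal" where
  "lower_quant_dim r \<nu> = liminf (\<lambda>n. ereal (ln (real n) / (- ln (quant_e n r \<nu>))))"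

end

theory Submission
  imports Defs
begin

lemma inv_integral:
  fixes \<mu> :: "'a measure" and g :: "'i \<Rightarrow> 'a \<Rightarrow> 'a" and w :: "'i \<Rightarrow> real"
  assumes fin: "finite I"
    and gm: "\<And>i. i \<in> I \<Longrightarrow> g i \<in> measurable \<mu> \<mu>"
    and eq: "\<And>B. B \<in> sets \<mu> \<Longrightarrow> emeasure \<mu> B = (\<Sum>i\<in>I. ennreal (w i) * emeasure \<mu> (g i -` B \<inter> space \<mu>))"
    and u: "u \<in> borel_measurable \<mu>"
  shows "(\<integral>\<^sup>+x. u x \<partial>\<mu>) = (\<Sum>i\<in>I. ennreal (w i) * (\<integral>\<^sup>+x. u (g i x) \<partial>\<mu>))"
  using u
proof (induction rule: borel_measurable_induct)
  case (cong f h)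
  have "(\<integral>\<^sup>+x. f x \<partial>\<mu>) = (\<integral>\<^sup>+x. h x \<partial>\<mu>)"
    by (rule nn_integral_cong) (use cong in auto)
  moreover have "(\<integral>\<^sup>+x. f (g i x) \<partial>\<mu>) = (\<integral>\<^sup>+x. h (g i x) \<partial>\<mu>)" if "i \<in> I" for i
    by (rule nn_integral_cong) (use cong gm[OF that] in \<open>auto simp: measurable_space\<close>)
  ultimately show ?case using cong by (auto intro!: sum.cong)
next
  case (set B)
  have "(\<integral>\<^sup>+x. indicator B (g i x) \<partial>\<mu>) = emeasure \<mu> (g i -` B \<inter> space \<mu>)" if "i \<in> I" for i
  proof -
    have "(\<integral>\<^sup>+x. indicator B (g i x) \<partial>\<mu>) = (\<integral>\<^sup>+x. indicator (g i -` B \<inter> space \<mu>) x \<partial>\<mu>)"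
      by (rule nn_integral_cong) (auto simp: indicator_def)
    also have "\<dots> = emeasure \<mu> (g i -` B \<inter> space \<mu>)"
      using measurable_sets[OF gm[OF that] set] by simp
    finally show ?thesis .
  qed
  then show ?case using set eq[OF set] by (simp cong: sum.cong)
next
  case (mult v c)
  have m: "(\<lambda>x. v (g i x)) \<in> borel_measurable \<mu>" if "i \<in> I" for i
    using measurable_comp[OF gm[OF that] mult(2)] by (simp add: o_def)
  have "(\<integral>\<^sup>+x. c * v x \<partial>\<mu>) = c * (\<integral>\<^sup>+x. v x \<partial>\<mu>)" using mult by (simp add: nn_integral_cmult)
  also have "\<dots> = (\<Sum>i\<in>I. ennreal (w i) * (c * \<integral>\<^sup>+x. v (g i x) \<partial>\<mu>))"
    using mult by (simp add: sum_distrib_left mult.left_commute)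
  also have "\<dots> = (\<Sum>i\<in>I. ennreal (w i) * (\<integral>\<^sup>+x. c * v (g i x) \<partial>\<mu>))"
    by (intro sum.cong refl) (simp add: nn_integral_cmult m)
  finally show ?case .
next
  case (add v v')
  have vm: "v \<in> borel_measurable \<mu>" "v' \<in> borel_measurable \<mu>" using add by auto
  have m: "(\<lambda>x. v (g i x)) \<in> borel_measurable \<mu>" "(\<lambda>x. v' (g i x)) \<in> borel_measurable \<mu>" if "i \<in> I" for i
    using measurable_comp[OF gm[OF that] vm(1)] measurable_comp[OF gm[OF that] vm(2)] by (simp_all add: o_def)
  have "(\<integral>\<^sup>+x. v' x + v x \<partial>\<mu>) = (\<integral>\<^sup>+x. v' x \<partial>\<mu>) + (\<integral>\<^sup>+x. v x \<partial>\<mu>)"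
    using add by (simp add: nn_integral_add)
  also have "\<dots> = (\<Sum>i\<in>I. ennreal (w i) * ((\<integral>\<^sup>+x. v' (g i x) \<partial>\<mu>) + (\<integral>\<^sup>+x. v (g i x) \<partial>\<mu>)))"
    using add by (simp add: sum.distrib distrib_left)
  also have "\<dots> = (\<Sum>i\<in>I. ennreal (w i) * (\<integral>\<^sup>+x. v' (g i x) + v (g i x) \<partial>\<mu>))"
    by (intro sum.cong refl) (simp add: nn_integral_add m)
  finally show ?case .
next
  case (seq U)
  have m: "(\<lambda>x. U j (g i x)) \<in> borel_measurable \<mu>" if "i \<in> I" for i j
    using measurable_comp[OF gm[OF that] seq(1)] by (simp add: o_def)
  have inc: "incseq (\<lambda>j x. U j (g i x))" for i
    using seq by (auto simp: incseq_def le_fun_def)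
  have "(\<integral>\<^sup>+x. (SUP j. U j) x \<partial>\<mu>) = (SUP j. \<integral>\<^sup>+x. U j x \<partial>\<mu>)"
    unfolding SUP_apply by (rule nn_integral_monotone_convergence_SUP) (use seq in auto)
  also have "\<dots> = (SUP j. \<Sum>i\<in>I. ennreal (w i) * (\<integral>\<^sup>+x. U j (g i x) \<partial>\<mu>))"
    by (rule SUP_cong[OF refl]) (use seq in auto)
  also have "\<dots> = (\<Sum>i\<in>I. SUP j. ennreal (w i) * (\<integral>\<^sup>+x. U j (g i x) \<partial>\<mu>))"
  proof (rule ennreal_SUP_sum)
    fix i assume "i \<in> I"
    show "incseq (\<lambda>j. ennreal (w i) * (\<integral>\<^sup>+x. U j (g i x) \<partial>\<mu>))"
      using inc[of i] by (auto simp: incseq_def le_fun_def intro!: mult_left_mono nn_integral_mono)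
  qed
  also have "\<dots> = (\<Sum>i\<in>I. ennreal (w i) * (\<integral>\<^sup>+x. (SUP j. U j) (g i x) \<partial>\<mu>))"
  proof (intro sum.cong refl)
    fix i assume i: "i \<in> I"
    have "(\<integral>\<^sup>+x. (SUP j. U j) (g i x) \<partial>\<mu>) = (\<integral>\<^sup>+x. (SUP j. U j (g i x)) \<partial>\<mu>)" unfolding SUP_apply ..
    also have "\<dots> = (SUP j. \<integral>\<^sup>+x. U j (g i x) \<partial>\<mu>)"
      by (rule nn_integral_monotone_convergence_SUP) (use inc[of i] m[OF i] in auto)
    finally show "(SUP j. ennreal (w i) * (\<integral>\<^sup>+x. U j (g i x) \<partial>\<mu>)) = ennreal (w i) * (\<integral>\<^sup>+x. (SUP j. U j) (g i x) \<partial>\<mu>)"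
      by (simp add: SUP_mult_left_ennreal)
  qed
  finally show ?case .
qed

lemma powr_neg_convex:
  assumes "e > 0" shows "convex_on {0<..} (\<lambda>x::real. x powr (-e))"
proof (rule f''_ge0_imp_convex[where f'="\<lambda>x. (-e) * x powr (-e - 1)" and f''="\<lambda>x. e * (e + 1) * x powr (-e - 2)"])
  show "convex {0::real<..}" by simp
next
  fix x :: real assume x: "x \<in> {0<..}"
  show "DERIV (\<lambda>x. x powr (-e)) x :> (-e) * x powr (-e - 1)"
    using x has_real_derivative_powr[of x "-e"] by simp
  have "DERIV (\<lambda>x. x powr (-e - 1)) x :> (-e - 1) * x powr (-e - 1 - 1)"
    using x has_real_derivative_powr[of x "-e - 1"] by simp
  from DERIV_cmult[OF this, of "-e"]
  show "DERIV (\<lambda>x. (-e) * x powr (-e - 1)) x :> e * (e + 1) * x powr (-e - 2)"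
    by (simp add: algebra_simps)
  show "0 \<le> e * (e + 1) * x powr (-e - 2)"
    using x assms by simp
qed

lemma holder_like:
  fixes a x :: "'i \<Rightarrow> real"
  assumes fin: "finite I" "I \<noteq> {}" and r: "r > 0" and k: "k > 0"
    and a: "\<And>i. i \<in> I \<Longrightarrow> a i > 0" and x: "\<And>i. i \<in> I \<Longrightarrow> x i > 0"
    and sum1: "(\<Sum>i\<in>I. a i powr (k / (r + k))) = 1"
  shows "(\<Sum>i\<in>I. x i) powr (- (r / k)) \<le> (\<Sum>i\<in>I. a i * x i powr (- (r / k)))"
proof -
  define q where "q i = a i powr (k / (r + k))" for i
  have qpos: "q i > 0" if "i \<in> I" for i using a[OF that] by (simp add: q_def)
  have e: "r / k > 0" using r k by simp
  have "(\<Sum>i\<in>I. q i *\<^sub>R (x i / q i)) powr (- (r / k)) \<le> (\<Sum>i\<in>I. q i * (x i / q i) powr (- (r / k)))"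
    by (rule convex_on_sum[OF fin powr_neg_convex[OF e]]) (use sum1 qpos x in \<open>auto simp: q_def less_imp_le\<close>)
  also have "\<dots> = (\<Sum>i\<in>I. a i * x i powr (- (r / k)))"
  proof (rule sum.cong[OF refl])
    fix i assume i: "i \<in> I"
    have "q i * (x i / q i) powr (- (r / k)) = q i powr (1 + r / k) * x i powr (- (r / k))"
      using qpos[OF i] x[OF i] by (simp add: powr_divide powr_add powr_minus field_simps)
    also have "q i powr (1 + r / k) = a i"
    proof -
      have "q i powr (1 + r / k) = a i powr (k / (r + k) * (1 + r / k))"
        by (simp add: q_def powr_powr)
      also have "k / (r + k) * (1 + r / k) = 1"
      proof -
        have "r + k > 0" using r k by simp
        then have "k * (r + k) > 0" using k by simp
        then show ?thesis using k by (simp add: field_simps)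
      qed
      finally show ?thesis using a[OF i] by simp
    qed
    finally show "q i * (x i / q i) powr (- (r / k)) = a i * x i powr (- (r / k))" .
  qed
  also have "(\<Sum>i\<in>I. q i *\<^sub>R (x i / q i)) = (\<Sum>i\<in>I. x i)"
    by (rule sum.cong) (use qpos in force)+
  finally show ?thesis .
qed

lemma core:
  fixes \<mu> :: "'a::euclidean_space measure" and g :: "'i \<Rightarrow> 'a \<Rightarrow> 'a" and P S :: "'i \<Rightarrow> real"
    and A :: "'a set" and W :: "'i set"
  assumes prob: "prob_space \<mu>"
    and AE_A: "AE x in \<mu>. x \<in> A"
    and inv: "\<And>u. u \<in> borel_measurable borel \<Longrightarrow>
                (\<integral>\<^sup>+x. u x \<partial>\<mu>) = (\<Sum>i\<in>W. ennreal (P i) * (\<integral>\<^sup>+x. u (g i x) \<partial>\<mu>))"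
    and finW: "finite W" and cardW: "card W \<ge> 2"
    and gc: "\<And>i. i \<in> W \<Longrightarrow> continuous_on UNIV (g i)"
    and gA: "\<And>i. i \<in> W \<Longrightarrow> g i ` A \<subseteq> A"
    and glow: "\<And>i x y. i \<in> W \<Longrightarrow> S i * dist x y \<le> dist (g i x) (g i y)"
    and S: "\<And>i. i \<in> W \<Longrightarrow> 0 < S i \<and> S i \<le> 1"
    and Ppos: "\<And>i. i \<in> W \<Longrightarrow> P i > 0"
    and \<delta>: "\<delta> > 0"
    and sep: "\<And>i j x y. i \<in> W \<Longrightarrow> j \<in> W \<Longrightarrow> i \<noteq> j \<Longrightarrow> x \<in> A \<Longrightarrow> y \<in> A \<Longrightarrow> \<delta> \<le> dist (g i x) (g j y)"
    and r: "r > 0" and k: "k > 0"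
    and keq: "(\<Sum>i\<in>W. (P i * S i powr r) powr (k / (r + k))) = 1"
  shows "\<exists>C>0. \<forall>\<alpha>. finite \<alpha> \<longrightarrow> \<alpha> \<noteq> {} \<longrightarrow>
     ennreal (C * real (card \<alpha>) powr (- (r / k))) \<le> (\<integral>\<^sup>+x. ennreal (Min ((\<lambda>a. norm (x - a) powr r) ` \<alpha>)) \<partial>\<mu>)"
proof -
  have Wne: "W \<noteq> {}" using cardW by auto
  define \<eta> where "\<eta> = Min ((\<lambda>i. P i * S i powr r) ` W)"
  have aPos: "P i * S i powr r > 0" if "i \<in> W" for i
    using Ppos[OF that] S[OF that] by simp
  have \<eta>pos: "\<eta> > 0" unfolding \<eta>_def using finW Wne aPos by (subst Min_gr_iff) auto
  have \<eta>le: "\<eta> \<le> P i * S i powr r" if "i \<in> W" for i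
    unfolding \<eta>_def using finW that by (intro Min_le) auto
  define C where "C = \<eta> * (\<delta> / 2) powr r"
  have Cpos: "C > 0" using \<eta>pos \<delta> by (simp add: C_def)
  define e where "e = r / k"
  have epos: "e > 0" using r k by (simp add: e_def)
  show ?thesis
  proof (intro exI[of _ C] conjI allI impI Cpos)
    fix \<alpha> :: "'a set" assume \<alpha>fin: "finite \<alpha>" and \<alpha>ne: "\<alpha> \<noteq> {}"
    define \<Phi> where "\<Phi> G t = (\<integral>\<^sup>+y. ennreal (min (infdist (G y) \<alpha>) (\<delta> * t / 2) powr r) \<partial>\<mu>)"
      for G :: "'a \<Rightarrow> 'a" and t
    define near where "near G t = {a\<in>\<alpha>. \<exists>x\<in>A. dist a (G x) < \<delta> * t / 2}"
      for G :: "'a \<Rightarrow> 'a" and t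
    define node where "node G t \<longleftrightarrow> continuous_on UNIV G \<and> 0 < t \<and> t \<le> 1 \<and>
        (\<forall>x y. t * dist x y \<le> dist (G x) (G y))" for G :: "'a \<Rightarrow> 'a" and t :: real
    have node_child: "node (G \<circ> g i) (t * S i)" if "node G t" "i \<in> W" for G t i
    proof -
      have "continuous_on UNIV (G \<circ> g i)"
        using that gc[of i] continuous_on_compose[of UNIV "g i" G] continuous_on_subset[of UNIV G "range (g i)"]
        by (auto simp: node_def)
      moreover have "t * S i * dist x y \<le> dist ((G \<circ> g i) x) ((G \<circ> g i) y)" for x y
      proof -
        have "t * S i * dist x y \<le> t * dist (g i x) (g i y)"
          using glow[OF that(2)] that(1) by (simp add: node_def mult.assoc)
        also have "\<dots> \<le> dist ((G \<circ> g i) x) ((G \<circ> g i) y)" using that(1) by (simp add: node_def)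
        finally show ?thesis .
      qed
      moreover have "0 < t * S i" "t * S i \<le> 1"
        using that S[OF that(2)] by (auto simp: node_def intro: mult_le_one)
      ultimately show ?thesis by (simp add: node_def)
    qed
    have meas: "(\<lambda>y. ennreal (min (infdist (G y) \<alpha>) c powr r)) \<in> borel_measurable borel"
      if "node G t" for G t c
    proof -
      have [measurable]: "(\<lambda>y. infdist (G y) \<alpha>) \<in> borel_measurable borel"
        using that by (intro borel_measurable_continuous_onI continuous_intros) (simp add: node_def)
      show ?thesis by measurable
    qed
    have infdist_ge: "d \<le> infdist x \<alpha>" if "\<And>a. a \<in> \<alpha> \<Longrightarrow> d \<le> dist x a" for x d
    proof -
      obtain a where "a \<in> \<alpha>" "infdist x \<alpha> = dist x a"
        using infdist_attains_inf[OF finite_imp_closed[OF \<alpha>fin] \<alpha>ne] by metis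
      then show ?thesis using that by simp
    qed
    have base: "ennreal ((\<delta> * t / 2) powr r) \<le> \<Phi> G t" if "node G t" "near G t = {}" for G t
    proof -
      have "ennreal ((\<delta> * t / 2) powr r) = (\<integral>\<^sup>+y. ennreal ((\<delta> * t / 2) powr r) \<partial>\<mu>)"
        using prob_space.emeasure_space_1[OF prob] by simp
      also have "\<dots> \<le> \<Phi> G t" unfolding \<Phi>_def
      proof (rule nn_integral_mono_AE)
        show "AE y in \<mu>. ennreal ((\<delta> * t / 2) powr r) \<le> ennreal (min (infdist (G y) \<alpha>) (\<delta> * t / 2) powr r)"
          using AE_A
        proof eventually_elim
          case (elim y)
          have "\<delta> * t / 2 \<le> infdist (G y) \<alpha>"
          proof (rule infdist_ge)
            fix a assume "a \<in> \<alpha>"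
            then have "\<not> dist a (G y) < \<delta> * t / 2" using that(2) elim by (auto simp: near_def)
            then show "\<delta> * t / 2 \<le> dist (G y) a" by (simp add: dist_commute)
          qed
          then show ?case by simp
        qed
      qed
      finally show ?thesis .
    qed
    have step: "(\<Sum>i\<in>W. ennreal (P i) * \<Phi> (G \<circ> g i) (t * S i)) \<le> \<Phi> G t" if "node G t" for G t
    proof -
      have "\<Phi> G t = (\<Sum>i\<in>W. ennreal (P i) *
          (\<integral>\<^sup>+y. ennreal (min (infdist (G (g i y)) \<alpha>) (\<delta> * t / 2) powr r) \<partial>\<mu>))"
        unfolding \<Phi>_def by (rule inv[OF meas[OF that]])
      moreover have "\<Phi> (G \<circ> g i) (t * S i) \<le>
          (\<integral>\<^sup>+y. ennreal (min (infdist (G (g i y)) \<alpha>) (\<delta> * t / 2) powr r) \<partial>\<mu>)" if i: "i \<in> W" for i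
        unfolding \<Phi>_def
      proof (rule nn_integral_mono)
        fix y
        have "\<delta> * (t * S i) / 2 \<le> \<delta> * t / 2"
          using S[OF i] \<delta> \<open>node G t\<close> by (auto simp: node_def intro!: mult_left_mono divide_right_mono mult_le_one)
        then have "min (infdist ((G \<circ> g i) y) \<alpha>) (\<delta> * (t * S i) / 2) \<le> min (infdist (G (g i y)) \<alpha>) (\<delta> * t / 2)"
          by auto
        moreover have "0 \<le> min (infdist ((G \<circ> g i) y) \<alpha>) (\<delta> * (t * S i) / 2)"
          using infdist_nonneg[of _ \<alpha>] S[OF i] \<delta> \<open>node G t\<close> by (auto simp: node_def)
        ultimately show "ennreal (min (infdist ((G \<circ> g i) y) \<alpha>) (\<delta> * (t * S i) / 2) powr r)
            \<le> ennreal (min (infdist (G (g i y)) \<alpha>) (\<delta> * t / 2) powr r)"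
          using r by (intro ennreal_leI powr_mono2) auto
      qed
      ultimately show ?thesis by (auto intro!: sum_mono mult_left_mono)
    qed
    have near_sub: "near (G \<circ> g i) (t * S i) \<subseteq> near G t" if "node G t" "i \<in> W" for G t i
    proof
      fix a assume "a \<in> near (G \<circ> g i) (t * S i)"
      then obtain x where x: "a \<in> \<alpha>" "x \<in> A" "dist a (G (g i x)) < \<delta> * (t * S i) / 2"
        by (auto simp: near_def)
      have "\<delta> * (t * S i) / 2 \<le> \<delta> * t / 2"
        using S[OF that(2)] \<delta> that(1) by (auto simp: node_def intro!: mult_left_mono divide_right_mono mult_le_one)
      moreover have "g i x \<in> A" using gA[OF that(2)] x(2) by auto
      ultimately show "a \<in> near G t" using x unfolding near_def
        by (intro CollectI conjI bexI[of _ "g i x"]) auto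
    qed
    have near_disj: "near (G \<circ> g i) (t * S i) \<inter> near (G \<circ> g j) (t * S j) = {}"
      if "node G t" "i \<in> W" "j \<in> W" "i \<noteq> j" for G t i j
    proof (rule ccontr)
      assume "near (G \<circ> g i) (t * S i) \<inter> near (G \<circ> g j) (t * S j) \<noteq> {}"
      then obtain a x y where xy: "x \<in> A" "y \<in> A" "dist a (G (g i x)) < \<delta> * (t * S i) / 2"
          "dist a (G (g j y)) < \<delta> * (t * S j) / 2"
        by (auto simp: near_def)
      have le: "\<delta> * (t * S l) / 2 \<le> \<delta> * t / 2" if "l \<in> W" for l
        using S[OF that] \<delta> \<open>node G t\<close> by (auto simp: node_def intro!: mult_left_mono divide_right_mono mult_le_one)
      have "dist (G (g i x)) (G (g j y)) < \<delta> * t"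
        using dist_triangle3[of "G (g i x)" "G (g j y)" a] xy(3,4) le[OF that(2)] le[OF that(3)] by linarith
      moreover have "t * \<delta> \<le> t * dist (g i x) (g j y)"
        using sep[OF that(2-4) xy(1,2)] that(1) by (auto simp: node_def)
      moreover have "t * dist (g i x) (g j y) \<le> dist (G (g i x)) (G (g j y))"
        using that(1) by (simp add: node_def)
      ultimately show False by (simp add: mult.commute)
    qed
    have near_fin: "finite (near G t)" for G t using \<alpha>fin by (simp add: near_def)
    have claim: "\<forall>G t. node G t \<longrightarrow> card (near G t) \<le> n \<longrightarrow>
        ennreal (t powr r * C * real n powr (- e)) \<le> \<Phi> G t" if "n \<ge> 1" for n
      using that
    proof (induction n rule: less_induct)
      case (less n)
      show ?case
      proof (intro allI impI)
        fix G t assume nd: "node G t" and cn: "card (near G t) \<le> n"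
        have tpos: "t > 0" using nd by (simp add: node_def)
        define ni where "ni i = card (near (G \<circ> g i) (t * S i))" for i
        have sum_le: "(\<Sum>i\<in>W. ni i) \<le> n"
        proof -
          have "(\<Sum>i\<in>W. ni i) = card (\<Union>i\<in>W. near (G \<circ> g i) (t * S i))"
            unfolding ni_def using finW near_fin near_disj[OF nd]
            by (subst card_UN_disjoint) auto
          also have "\<dots> \<le> card (near G t)"
            using near_sub[OF nd] near_fin by (intro card_mono) auto
          finally show ?thesis using cn by simp
        qed
        have npow: "real n powr (- e) \<le> 1"
          using less.prems epos by (simp add: powr_minus divide_simps ge_one_powr_ge_zero)
        have sumPhi: "(\<Sum>i\<in>W. ennreal (P i) * \<Phi> (G \<circ> g i) (t * S i)) \<le> \<Phi> G t"
          by (rule step[OF nd])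
        show "ennreal (t powr r * C * real n powr (- e)) \<le> \<Phi> G t"
        proof (cases "\<exists>j\<in>W. ni j = 0")
          case True
          then obtain j where j: "j \<in> W" "ni j = 0" by auto
          have empty: "near (G \<circ> g j) (t * S j) = {}" using j near_fin unfolding ni_def by auto
          have Sj: "0 < S j" "S j \<le> 1" using S[OF j(1)] by auto
          have "t powr r * C * real n powr (- e) \<le> t powr r * C"
            by (rule mult_left_le) (use npow tpos Cpos in auto)
          also have "t powr r * C \<le> P j * (\<delta> * (t * S j) / 2) powr r"
          proof -
            have eq0: "\<delta> * (t * S j) / 2 = t * (S j * (\<delta> / 2))" by (simp add: field_simps)
            have p1: "(t * (S j * (\<delta> / 2))) powr r = t powr r * (S j * (\<delta> / 2)) powr r"
              using tpos Sj \<delta> by (intro powr_mult; simp)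
            have p2: "(S j * (\<delta> / 2)) powr r = S j powr r * (\<delta> / 2) powr r"
              using Sj \<delta> by (intro powr_mult; simp)
            have eq: "P j * (\<delta> * (t * S j) / 2) powr r = t powr r * ((P j * S j powr r) * (\<delta> / 2) powr r)"
              unfolding eq0 p1 p2 by (simp only: mult_ac)
            have "C \<le> (P j * S j powr r) * (\<delta> / 2) powr r"
              unfolding C_def using \<eta>le[OF j(1)] \<delta> by (intro mult_right_mono) auto
            then have "t powr r * C \<le> t powr r * ((P j * S j powr r) * (\<delta> / 2) powr r)"
              by (rule mult_left_mono) simp
            then show ?thesis unfolding eq .
          qed
          finally have "ennreal (t powr r * C * real n powr (- e)) \<le> ennreal (P j * (\<delta> * (t * S j) / 2) powr r)"
            by (rule ennreal_leI)
          also have "\<dots> = ennreal (P j) * ennreal ((\<delta> * (t * S j) / 2) powr r)"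
            using Ppos[OF j(1)] by (intro ennreal_mult') simp
          also have "\<dots> \<le> ennreal (P j) * \<Phi> (G \<circ> g j) (t * S j)"
            using base[OF node_child[OF nd j(1)] empty] by (rule mult_left_mono) simp
          also have "\<dots> \<le> (\<Sum>i\<in>W. ennreal (P i) * \<Phi> (G \<circ> g i) (t * S i))"
            by (rule member_le_sum[OF j(1) _ finW, where f="\<lambda>i. ennreal (P i) * \<Phi> (G \<circ> g i) (t * S i)"]) simp
          finally show ?thesis using sumPhi by (rule order_trans)
        next
          case False
          then have ni1: "ni i \<ge> 1" if "i \<in> W" for i using that by force
          have niless: "ni i < n" if i: "i \<in> W" for i
          proof -
            obtain j where j: "j \<in> W" "j \<noteq> i"
            proof -
              have "W - {i} \<noteq> {}"
              proof
                assume "W - {i} = {}"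
                then have "W \<subseteq> {i}" by auto
                then have "card W \<le> 1" using card_mono[of "{i}" W] by simp
                with cardW show False by simp
              qed
              then show ?thesis using that by auto
            qed
            have "ni i + ni j \<le> (\<Sum>i\<in>W. ni i)"
            proof -
              have "(\<Sum>l\<in>{i, j}. ni l) \<le> (\<Sum>l\<in>W. ni l)"
                using i j finW by (intro sum_mono2) auto
              then show ?thesis using j by simp
            qed
            then show ?thesis using ni1[OF j(1)] sum_le by linarith
          qed
          have IH: "ennreal ((t * S i) powr r * C * real (ni i) powr (- e)) \<le> \<Phi> (G \<circ> g i) (t * S i)"
            if i: "i \<in> W" for i
            using less.IH[OF niless[OF i] ni1[OF i]] node_child[OF nd i] unfolding ni_def by blast
          have "t powr r * C * real n powr (- e) \<le> t powr r * C * (\<Sum>i\<in>W. real (ni i)) powr (- e)" (is "?L \<le> _")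
          proof -
            have "(\<Sum>i\<in>W. real (ni i)) \<ge> 1"
            proof -
              obtain i0 where i0: "i0 \<in> W" using Wne by auto
              have "real (ni i0) \<le> (\<Sum>i\<in>W. real (ni i))"
                by (rule member_le_sum[OF i0 _ finW]) simp
              moreover have "real (ni i0) \<ge> 1" using ni1[OF i0] by simp
              ultimately show ?thesis by linarith
            qed
            moreover have "(\<Sum>i\<in>W. real (ni i)) \<le> real n"
            proof -
              have "real (\<Sum>i\<in>W. ni i) \<le> real n" using sum_le by (simp only: of_nat_le_iff)
              then show ?thesis by (simp only: of_nat_sum)
            qed
            ultimately have "real n powr (- e) \<le> (\<Sum>i\<in>W. real (ni i)) powr (- e)"
              using epos by (intro powr_mono2') auto
            then show ?thesis using tpos Cpos by (simp add: mult_left_mono)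
          qed
          also have "\<dots> \<le> t powr r * C * (\<Sum>i\<in>W. (P i * S i powr r) * real (ni i) powr (- e))"
          proof -
            have "(\<Sum>i\<in>W. real (ni i)) powr (- (r / k)) \<le> (\<Sum>i\<in>W. (P i * S i powr r) * real (ni i) powr (- (r / k)))"
              by (rule holder_like[OF finW Wne r k]) (use aPos ni1 keq in \<open>auto simp: Suc_le_eq\<close>)
            then show ?thesis using tpos Cpos unfolding e_def by (simp add: mult_left_mono)
          qed
          also have "\<dots> = (\<Sum>i\<in>W. P i * ((t * S i) powr r * C * real (ni i) powr (- e)))"
            unfolding sum_distrib_left
          proof (rule sum.cong[OF refl])
            fix i assume i: "i \<in> W"
            have "(t * S i) powr r = t powr r * S i powr r"
              using tpos S[OF i] by (simp add: powr_mult)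
            then show "t powr r * C * (P i * S i powr r * real (ni i) powr (- e)) =
                P i * ((t * S i) powr r * C * real (ni i) powr (- e))"
              by (simp add: mult_ac)
          qed
          finally have real_ineq: "?L \<le> (\<Sum>i\<in>W. P i * ((t * S i) powr r * C * real (ni i) powr (- e)))" .
          have "ennreal ?L \<le> ennreal (\<Sum>i\<in>W. P i * ((t * S i) powr r * C * real (ni i) powr (- e)))"
            using real_ineq by (rule ennreal_leI)
          also have "\<dots> = (\<Sum>i\<in>W. ennreal (P i * ((t * S i) powr r * C * real (ni i) powr (- e))))"
          proof (rule sum_ennreal[symmetric])
            fix i assume i: "i \<in> W"
            have "0 \<le> P i" using Ppos[OF i] by simp
            moreover have "0 \<le> (t * S i) powr r * C * real (ni i) powr (- e)" using Cpos by simp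
            ultimately show "0 \<le> P i * ((t * S i) powr r * C * real (ni i) powr (- e))" by simp
          qed
          also have "\<dots> = (\<Sum>i\<in>W. ennreal (P i) * ennreal ((t * S i) powr r * C * real (ni i) powr (- e)))"
            by (rule sum.cong[OF refl]) (use Ppos in \<open>simp add: ennreal_mult' less_imp_le\<close>)
          also have "\<dots> \<le> (\<Sum>i\<in>W. ennreal (P i) * \<Phi> (G \<circ> g i) (t * S i))"
            by (intro sum_mono mult_left_mono IH) auto
          finally show ?thesis using sumPhi by (rule order_trans)
        qed
      qed
    qed
    have root: "node id 1" by (simp add: node_def continuous_on_id)
    have "1 \<le> card \<alpha>" using \<alpha>fin \<alpha>ne by (simp add: Suc_le_eq card_gt_0_iff)
    moreover have "card (near id 1) \<le> card \<alpha>" by (rule card_mono[OF \<alpha>fin]) (auto simp: near_def)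
    ultimately have "ennreal (1 powr r * C * real (card \<alpha>) powr (- e)) \<le> \<Phi> id 1"
      using claim[of "card \<alpha>"] root by blast
    also have "\<dots> \<le> (\<integral>\<^sup>+x. ennreal (Min ((\<lambda>a. norm (x - a) powr r) ` \<alpha>)) \<partial>\<mu>)"
      unfolding \<Phi>_def
    proof (rule nn_integral_mono)
      fix x
      have "min (infdist x \<alpha>) (\<delta> * 1 / 2) powr r \<le> infdist x \<alpha> powr r"
        using r infdist_nonneg[of x \<alpha>] \<delta> by (intro powr_mono2) auto
      also have "\<dots> \<le> Min ((\<lambda>a. norm (x - a) powr r) ` \<alpha>)"
        using \<alpha>fin \<alpha>ne r
        by (intro Min.boundedI) (auto intro!: powr_mono2 infdist_nonneg simp: dist_norm[symmetric] infdist_le)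
      finally show "ennreal (min (infdist (id x) \<alpha>) (\<delta> * 1 / 2) powr r) \<le> ennreal (Min ((\<lambda>a. norm (x - a) powr r) ` \<alpha>))"
        by (simp add: ennreal_leI)
    qed
    finally show "ennreal (C * real (card \<alpha>) powr (- (r / k))) \<le> (\<integral>\<^sup>+x. ennreal (Min ((\<lambda>a. norm (x - a) powr r) ` \<alpha>)) \<partial>\<mu>)"
      by (simp add: e_def)
  qed
qed

lemma word_map_Nil[simp]: "word_map f [] = id" by (simp add: word_map_def)
lemma word_map_Cons[simp]: "word_map f (i # w) = f i \<circ> word_map f w" by (simp add: word_map_def)
lemma word_prod_Nil[simp]: "word_prod p [] = 1" by (simp add: word_prod_def)
lemma word_prod_Cons[simp]: "word_prod p (i # w) = p i * word_prod p w" by (simp add: word_prod_def)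

lemma word_prod_pos: "(\<And>i. i \<in> set w \<Longrightarrow> p i > 0) \<Longrightarrow> word_prod p w > 0"
  by (induction w) auto

lemma word_prod_nonneg: "(\<And>i. i \<in> set w \<Longrightarrow> 0 \<le> p i) \<Longrightarrow> 0 \<le> word_prod p w"
  by (induction w) auto

lemma word_prod_le1: "(\<And>i. i \<in> set w \<Longrightarrow> 0 \<le> p i \<and> p i \<le> 1) \<Longrightarrow> word_prod p w \<le> 1"
proof (induction w)
  case (Cons i w)
  then have "word_prod p w \<le> 1" by auto
  moreover have "0 \<le> word_prod p w"
    using Cons.prems by (intro word_prod_nonneg) auto
  ultimately show ?case using Cons.prems[of i] by (auto intro: mult_le_one)
qed simp

lemma word_prod_lt1: "(\<And>i. i \<in> set w \<Longrightarrow> 0 < p i \<and> p i < 1) \<Longrightarrow> w \<noteq> [] \<Longrightarrow> word_prod p w < 1"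
proof (induction w)
  case (Cons i w)
  have "word_prod p w \<le> 1" using Cons.prems by (intro word_prod_le1) (meson less_imp_le list.set_intros(2))
  moreover have "p i < 1" "0 < p i" using Cons.prems by auto
  ultimately have "p i * word_prod p w \<le> p i" using mult_left_mono[of "word_prod p w" 1 "p i"] by simp
  then show ?case using \<open>p i < 1\<close> by simp
qed simp

lemma word_lower:
  assumes "\<And>i x y. i \<in> set w \<Longrightarrow> s i * norm (x - y) \<le> norm (f i x - f i y)"
    and "\<And>i. i \<in> set w \<Longrightarrow> 0 \<le> s i"
  shows "word_prod s w * norm (x - y) \<le> norm (word_map f w x - word_map f w y)"
  using assms
proof (induction w arbitrary: x y)
  case (Cons i w)
  have "word_prod s (i # w) * norm (x - y) = s i * (word_prod s w * norm (x - y))" by simp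
  also have "\<dots> \<le> s i * norm (word_map f w x - word_map f w y)"
    using Cons by (intro mult_left_mono) auto
  also have "\<dots> \<le> norm (word_map f (i # w) x - word_map f (i # w) y)"
    using Cons.prems(1)[of i] by simp
  finally show ?case .
qed simp

lemma word_upper:
  assumes "\<And>i x y. i \<in> set w \<Longrightarrow> norm (f i x - f i y) \<le> c i * norm (x - y)"
    and "\<And>i. i \<in> set w \<Longrightarrow> 0 \<le> c i"
  shows "norm (word_map f w x - word_map f w y) \<le> word_prod c w * norm (x - y)"
  using assms
proof (induction w arbitrary: x y)
  case (Cons i w)
  have "norm (word_map f (i # w) x - word_map f (i # w) y) \<le> c i * norm (word_map f w x - word_map f w y)"
    using Cons.prems(1)[of i] by simp
  also have "\<dots> \<le> c i * (word_prod c w * norm (x - y))"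
    using Cons by (intro mult_left_mono) auto
  finally show ?case by (simp add: mult_ac)
qed simp

lemma word_maps_into:
  assumes "\<And>i. i \<in> set w \<Longrightarrow> f i ` X \<subseteq> X"
  shows "word_map f w ` X \<subseteq> X"
  using assms by (induction w) (auto simp: image_subset_iff)

lemma word_disjoint:
  assumes inj: "\<And>i. i \<in> D \<Longrightarrow> inj (f i)"
    and into: "\<And>i. i \<in> D \<Longrightarrow> f i ` U \<subseteq> U"
    and disj: "\<And>i j. i \<in> D \<Longrightarrow> j \<in> D \<Longrightarrow> i \<noteq> j \<Longrightarrow> f i ` U \<inter> f j ` U = {}"
  shows "set w \<subseteq> D \<Longrightarrow> set w' \<subseteq> D \<Longrightarrow> length w = length w' \<Longrightarrow> w \<noteq> w' \<Longrightarrow>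
     word_map f w ` U \<inter> word_map f w' ` U = {}"
proof (induction w arbitrary: w')
  case Nil then show ?case by simp
next
  case (Cons i w)
  then obtain j w'' where w': "w' = j # w''" by (cases w') auto
  have wU: "word_map f w ` U \<subseteq> U" "word_map f w'' ` U \<subseteq> U"
    using Cons.prems w' into by (auto intro!: word_maps_into)
  show ?case
  proof (cases "i = j")
    case True
    then have "w \<noteq> w''" using Cons.prems w' by auto
    then have d: "word_map f w ` U \<inter> word_map f w'' ` U = {}"
      using Cons w' by auto
    have "inj (f i)" using inj Cons.prems by auto
    then show ?thesis using d True w' by (auto simp: inj_def)
  next
    case False
    have "f i ` U \<inter> f j ` U = {}" using disj False Cons.prems w' by auto
    moreover have "word_map f (i # w) ` U \<subseteq> f i ` U" using wU by (auto simp: image_subset_iff)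
    moreover have "word_map f w' ` U \<subseteq> f j ` U" using wU w' by (auto simp: image_subset_iff)
    ultimately show ?thesis by blast
  qed
qed

lemma concentrated:
  fixes \<mu> :: "'a::euclidean_space measure" and g :: "'i \<Rightarrow> 'a \<Rightarrow> 'a"
  assumes prob: "prob_space \<mu>" and sets: "sets \<mu> = sets borel"
    and finW: "finite W"
    and eqm: "\<And>B. B \<in> sets borel \<Longrightarrow> emeasure \<mu> B = (\<Sum>w\<in>W. ennreal (P w) * emeasure \<mu> (g w -` B))"
    and Pnn: "\<And>w. w \<in> W \<Longrightarrow> 0 \<le> P w"
    and Psum: "(\<Sum>w\<in>W. P w) = 1"
    and A: "compact A" "A \<noteq> {}"
    and gA: "\<And>w. w \<in> W \<Longrightarrow> g w ` A \<subseteq> A"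
    and L: "0 < L" "L < 1" and Lip: "\<And>w x y. w \<in> W \<Longrightarrow> dist (g w x) (g w y) \<le> L * dist x y"
  shows "AE x in \<mu>. x \<in> A"
proof -
  interpret prob_space \<mu> by (rule prob)
  have clA: "closed A" using A by (simp add: compact_imp_closed)
  define Bt where "Bt t = {x. t < infdist x A}" for t
  have Bt_sets: "Bt t \<in> sets \<mu>" for t
  proof -
    have "open (Bt t)" unfolding Bt_def
      by (intro open_Collect_less continuous_intros)
    then show ?thesis using sets by simp
  qed
  have Bt_mono: "Bt t' \<subseteq> Bt t" if "t \<le> t'" for t t' using that by (auto simp: Bt_def)
  have sub: "g w -` Bt t \<subseteq> Bt (t / L)" if "w \<in> W" for w t
  proof
    fix x assume x: "x \<in> g w -` Bt t"
    obtain a where a: "a \<in> A" "infdist x A = dist x a"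
      using infdist_attains_inf[OF clA A(2)] by metis
    have "infdist (g w x) A \<le> dist (g w x) (g w a)"
      using gA[OF that] a(1) by (intro infdist_le) auto
    also have "\<dots> \<le> L * infdist x A" using Lip[OF that] a(2) by simp
    finally have "t < L * infdist x A" using x by (simp add: Bt_def)
    then show "x \<in> Bt (t / L)" using L by (simp add: Bt_def field_simps)
  qed
  have ineq: "measure \<mu> (Bt t) \<le> measure \<mu> (Bt (t / L))" for t
  proof -
    have "emeasure \<mu> (Bt t) = (\<Sum>w\<in>W. ennreal (P w) * emeasure \<mu> (g w -` Bt t))"
      using eqm Bt_sets sets by simp
    also have "\<dots> \<le> (\<Sum>w\<in>W. ennreal (P w) * emeasure \<mu> (Bt (t / L)))"
      by (intro sum_mono mult_left_mono emeasure_mono sub Bt_sets) auto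
    also have "\<dots> = (\<Sum>w\<in>W. ennreal (P w)) * emeasure \<mu> (Bt (t / L))"
      by (simp add: sum_distrib_right)
    also have "(\<Sum>w\<in>W. ennreal (P w)) = 1" using Pnn Psum by simp
    finally have "emeasure \<mu> (Bt t) \<le> emeasure \<mu> (Bt (t / L))" by simp
    then show ?thesis by (simp add: emeasure_eq_measure)
  qed
  have iter: "measure \<mu> (Bt t) \<le> measure \<mu> (Bt (t / L ^ n))" for t n
  proof (induction n)
    case (Suc n)
    have "measure \<mu> (Bt (t / L ^ n)) \<le> measure \<mu> (Bt (t / L ^ n / L))" by (rule ineq)
    then show ?case using Suc by (simp add: mult.commute)
  qed simp
  have lim: "(\<lambda>n. measure \<mu> (Bt (real n))) \<longlonglongrightarrow> measure \<mu> (\<Inter>n. Bt (real n))"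
    by (rule Lim_measure_decseq) (auto simp: decseq_def Bt_sets intro!: Bt_mono)
  have "(\<Inter>n. Bt (real n)) = {}"
  proof (rule ccontr)
    assume "(\<Inter>n. Bt (real n)) \<noteq> {}"
    then obtain x where "\<forall>n. x \<in> Bt (real n)" by auto
    moreover obtain n where "infdist x A < real n" using reals_Archimedean2 by blast
    ultimately show False unfolding Bt_def using less_asym by blast
  qed
  then have lim0: "(\<lambda>n. measure \<mu> (Bt (real n))) \<longlonglongrightarrow> 0" using lim by simp
  have zero: "measure \<mu> (Bt t) = 0" if t: "t > 0" for t
  proof (rule ccontr)
    assume "measure \<mu> (Bt t) \<noteq> 0"
    then have \<epsilon>: "measure \<mu> (Bt t) > 0" using measure_nonneg[of \<mu> "Bt t"] by linarith
    from lim0[THEN order_tendstoD(2), OF \<epsilon>] obtain n0 where n0: "measure \<mu> (Bt (real n0)) < measure \<mu> (Bt t)"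
      by (auto simp: eventually_sequentially)
    obtain n where n: "real n0 / t < (1 / L) ^ n" using real_arch_pow[of "1 / L"] L by auto
    have "real n0 \<le> t / L ^ n" using n t L by (simp add: field_simps power_divide)
    then have "measure \<mu> (Bt (t / L ^ n)) \<le> measure \<mu> (Bt (real n0))"
      by (intro finite_measure_mono Bt_mono Bt_sets)
    with iter[of t n] n0 show False by simp
  qed
  have null: "(\<Union>n. Bt (1 / Suc n)) \<in> null_sets \<mu>"
  proof (rule null_sets_UN)
    fix n :: nat
    show "Bt (1 / Suc n) \<in> null_sets \<mu>"
      using zero[of "1 / Suc n"] Bt_sets by (simp add: null_sets_def emeasure_eq_measure)
  qed
  show ?thesis
  proof (rule AE_I'[OF null])
    show "{x \<in> space \<mu>. x \<notin> A} \<subseteq> (\<Union>n. Bt (1 / Suc n))"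
    proof
      fix x assume "x \<in> {x \<in> space \<mu>. x \<notin> A}"
      then have "infdist x A > 0" using infdist_pos_not_in_closed[OF clA] A by auto
      then obtain n0 where n0: "0 < n0" "inverse (real n0) < infdist x A"
        using ex_inverse_of_nat_less by blast
      then obtain n where "n0 = Suc n" using gr0_conv_Suc by blast
      then have "1 / real (Suc n) < infdist x A" using n0 by (simp add: inverse_eq_divide)
      then show "x \<in> (\<Union>n. Bt (1 / Suc n))" by (auto simp: Bt_def)
    qed
  qed
qed

theorem mainTheorem19:
  fixes N m :: nat
    and f :: "nat \<Rightarrow> 'a::euclidean_space \<Rightarrow> 'a"
    and p s c :: "nat \<Rightarrow> real"
    and A U :: "'a set"
    and \<sigma> :: "nat list"
    and \<mu> :: "'a measure"
    and r k :: real
  assumes p_pos: "\<forall>i\<in>{1..N}. p i > 0"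
    and p_sum: "(\<Sum>i\<in>{1..N}. p i) = 1"
    and sc: "\<forall>i\<in>{1..N}. 0 < s i \<and> s i \<le> c i \<and> c i < 1"
    and bilip: "\<forall>i\<in>{1..N}. \<forall>x y. s i * norm (x - y) \<le> norm (f i x - f i y)
                    \<and> norm (f i x - f i y) \<le> c i * norm (x - y)"
    and attr: "is_attractor {1..N} f A"
    and sosc: "SOSC_with {1..N} f A U"
    and \<sigma>_word: "set \<sigma> \<subseteq> {1..N}"
    and \<sigma>_U: "word_map f \<sigma> ` A \<subseteq> U"
    and m_pos: "m \<ge> 1"
    and inv: "is_invariant_measure (words N m) (\<lambda>w. word_map f w \<circ> word_map f \<sigma>)
                 (word_prod p) \<mu>"
    and r_pos: "r > 0"
    and k_pos: "k > 0"
    and k_eq: "(\<Sum>w\<in>words N m. (word_prod p w * (word_prod s w * word_prod s \<sigma>) powr r)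
                   powr (k / (r + k))) = 1"
  shows "(\<forall>l0. 0 < l0 \<and> l0 < k \<longrightarrow>
            liminf (\<lambda>n. ereal (real n * quant_e n r \<mu> powr l0)) > 0)
         \<and> ereal k \<le> lower_quant_dim r \<mu>"
proof -
  define W where "W = words N m"
  define g where "g = (\<lambda>w. word_map f w \<circ> word_map f \<sigma>)"
  define P where "P = word_prod p"
  define S where "S w = word_prod s w * word_prod s \<sigma>" for w
  define Lc where "Lc w = word_prod c w * word_prod c \<sigma>" for w
  have finW: "finite W" unfolding W_def words_def
    using finite_lists_length_eq[of "{1..N}" m] by (simp add: conj_commute)
  have wW: "set w \<subseteq> {1..N}" "length w = m" "w \<noteq> []" if "w \<in> W" for w
    using that m_pos by (auto simp: W_def words_def)
  have sD: "0 < s i" "s i < 1" "0 < c i" "c i < 1" if "i \<in> {1..N}" for i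
    using sc that by (auto dest!: bspec[of _ _ i])
  have pD: "0 < p i" "p i \<le> 1" if "i \<in> {1..N}" for i
  proof -
    show "0 < p i" using p_pos that by auto
    have pnn: "0 \<le> p j" if "j \<in> {1..N}" for j using p_pos that less_imp_le by blast
    have "p i \<le> (\<Sum>i\<in>{1..N}. p i)" using that pnn by (intro member_le_sum) auto
    then show "p i \<le> 1" using p_sum by simp
  qed
  have wprops: "0 < word_prod s u" "word_prod s u \<le> 1" "0 < word_prod c u" "word_prod c u \<le> 1"
      "0 < word_prod p u" "word_prod p u \<le> 1" if "set u \<subseteq> {1..N}" for u
    using that sD pD by (auto intro!: word_prod_pos word_prod_le1 simp: subset_iff less_imp_le)
  have wlt: "word_prod s u < 1" "word_prod c u < 1" if "set u \<subseteq> {1..N}" "u \<noteq> []" for u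
    using that sD by (auto intro!: word_prod_lt1 simp: subset_iff)
  have wlow: "word_prod s u * norm (x - y) \<le> norm (word_map f u x - word_map f u y)"
    if "set u \<subseteq> {1..N}" for u x y
    using that bilip sD by (intro word_lower) (auto simp: subset_iff less_imp_le)
  have wup: "norm (word_map f u x - word_map f u y) \<le> word_prod c u * norm (x - y)"
    if "set u \<subseteq> {1..N}" for u x y
    using that bilip sD by (intro word_upper) (auto simp: subset_iff less_imp_le)
  have Spos: "0 < S w" "S w \<le> 1" if "w \<in> W" for w
    using wprops[OF wW(1)[OF that]] wprops[OF \<sigma>_word] by (auto simp: S_def intro: mult_le_one)
  have Slow: "S w * dist x y \<le> dist (g w x) (g w y)" if "w \<in> W" for w x y
  proof -
    have "S w * dist x y = word_prod s w * (word_prod s \<sigma> * norm (x - y))"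
      by (simp add: S_def dist_norm mult_ac)
    also have "\<dots> \<le> word_prod s w * norm (word_map f \<sigma> x - word_map f \<sigma> y)"
      using wlow[OF \<sigma>_word] wprops[OF wW(1)[OF that]] by (intro mult_left_mono) auto
    also have "\<dots> \<le> dist (g w x) (g w y)"
      using wlow[OF wW(1)[OF that]] by (simp add: g_def dist_norm)
    finally show ?thesis .
  qed
  have Lup: "dist (g w x) (g w y) \<le> Lc w * dist x y" if "w \<in> W" for w x y
  proof -
    have "dist (g w x) (g w y) \<le> word_prod c w * norm (word_map f \<sigma> x - word_map f \<sigma> y)"
      using wup[OF wW(1)[OF that]] by (simp add: g_def dist_norm)
    also have "\<dots> \<le> word_prod c w * (word_prod c \<sigma> * norm (x - y))"
      using wup[OF \<sigma>_word] wprops[OF wW(1)[OF that]] by (intro mult_left_mono) auto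
    finally show ?thesis by (simp add: Lc_def dist_norm mult_ac)
  qed
  have Lc: "0 < Lc w" "Lc w < 1" if "w \<in> W" for w
  proof -
    show "0 < Lc w" using wprops[OF wW(1)[OF that]] wprops[OF \<sigma>_word] by (simp add: Lc_def)
    have "word_prod c w < 1" using wlt[OF wW(1,3)[OF that]] by simp
    moreover have "0 < word_prod c \<sigma>" "word_prod c \<sigma> \<le> 1" using wprops[OF \<sigma>_word] by auto
    ultimately have "word_prod c w * word_prod c \<sigma> \<le> word_prod c w"
      using mult_left_mono[of "word_prod c \<sigma>" 1 "word_prod c w"] wprops[OF wW(1)[OF that]] by simp
    then show "Lc w < 1" using \<open>word_prod c w < 1\<close> by (simp add: Lc_def)
  qed
  have gcont: "continuous_on UNIV (g w)" if "w \<in> W" for w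
  proof (rule lipschitz_on_continuous_on)
    show "(Lc w)-lipschitz_on UNIV (g w)"
      using Lup[OF that] Lc[OF that] by (intro lipschitz_onI) auto
  qed
  have fiA: "f i ` A \<subseteq> A" if "i \<in> {1..N}" for i
    using attr that unfolding is_attractor_def by blast
  have gA: "g w ` A \<subseteq> A" if "w \<in> W" for w
  proof -
    have "word_map f \<sigma> ` A \<subseteq> A" using \<sigma>_word fiA by (intro word_maps_into) blast
    moreover have "word_map f w ` A \<subseteq> A" using wW(1)[OF that] fiA by (intro word_maps_into) blast
    ultimately show ?thesis by (auto simp: g_def)
  qed
  have Ppos: "0 < P w" if "w \<in> W" for w using wprops[OF wW(1)[OF that]] by (simp add: P_def)
  have A: "compact A" "A \<noteq> {}" using attr by (auto simp: is_attractor_def)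
  have inv': "is_invariant_measure W g P \<mu>" using inv by (simp add: W_def g_def P_def)
  have prob: "prob_space \<mu>" and sets\<mu>: "sets \<mu> = sets borel"
    and eqm: "\<And>B. B \<in> sets borel \<Longrightarrow> emeasure \<mu> B = (\<Sum>w\<in>W. ennreal (P w) * emeasure \<mu> (g w -` B))"
    using inv' by (auto simp: is_invariant_measure_def)
  have space\<mu>: "space \<mu> = UNIV" using sets_eq_imp_space_eq[OF sets\<mu>] by simp
  have Psum: "(\<Sum>w\<in>W. P w) = 1"
  proof -
    have "emeasure \<mu> UNIV = 1" using prob_space.emeasure_space_1[OF prob] space\<mu> by simp
    then have "1 = (\<Sum>w\<in>W. ennreal (P w))" using eqm[of UNIV] by simp
    also have "\<dots> = ennreal (\<Sum>w\<in>W. P w)" using Ppos by (simp add: less_imp_le)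
    finally show ?thesis using Ppos by (simp add: sum_nonneg less_imp_le)
  qed
  have keq: "(\<Sum>w\<in>W. (P w * S w powr r) powr (k / (r + k))) = 1"
    using k_eq by (simp add: W_def P_def S_def)
  have cardW: "card W \<ge> 2"
  proof (rule ccontr)
    assume "\<not> card W \<ge> 2"
    moreover have "W \<noteq> {}" using keq by auto
    moreover have "card W > 0" using finW \<open>W \<noteq> {}\<close> by (simp add: card_gt_0_iff)
    ultimately have "card W = 1" by linarith
    then obtain w0 where W0: "W = {w0}" by (auto simp: card_1_singleton_iff)
    then have w0: "w0 \<in> W" by simp
    have "S w0 < 1"
    proof -
      have "word_prod s w0 < 1" using wlt[OF wW(1,3)[OF w0]] by simp
      moreover have "0 < word_prod s \<sigma>" "word_prod s \<sigma> \<le> 1" using wprops[OF \<sigma>_word] by auto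
      ultimately have "word_prod s w0 * word_prod s \<sigma> \<le> word_prod s w0"
        using mult_left_mono[of "word_prod s \<sigma>" 1 "word_prod s w0"] wprops[OF wW(1)[OF w0]] by simp
      then show ?thesis using \<open>word_prod s w0 < 1\<close> by (simp add: S_def)
    qed
    then have "S w0 powr r < 1" using Spos[OF w0] r_pos powr_less_mono2[of r "S w0" 1] by simp
    moreover have "P w0 \<le> 1" using wprops[OF wW(1)[OF w0]] by (simp add: P_def)
    ultimately have "P w0 * S w0 powr r < 1" using Ppos[OF w0]
      using mult_le_less_imp_less[of "P w0" 1 "S w0 powr r" 1] by simp
    moreover have "0 \<le> P w0 * S w0 powr r" using Ppos[OF w0] by simp
    ultimately have "(P w0 * S w0 powr r) powr (k / (r + k)) < 1"
      using powr_less_mono2[of "k / (r + k)" "P w0 * S w0 powr r" 1] r_pos k_pos by simp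
    then show False using keq W0 by simp
  qed
  have finj: "inj (f i)" if "i \<in> {1..N}" for i
  proof (rule injI)
    fix x y assume "f i x = f i y"
    moreover have "s i * norm (x - y) \<le> norm (f i x - f i y)" using bilip that by blast
    ultimately have "s i * norm (x - y) \<le> 0" by simp
    then show "x = y" using sD(1)[OF that] by (simp add: mult_le_0_iff)
  qed
  have disjA: "g w ` A \<inter> g w' ` A = {}" if "w \<in> W" "w' \<in> W" "w \<noteq> w'" for w w'
  proof -
    have "word_map f w ` U \<inter> word_map f w' ` U = {}"
      by (rule word_disjoint[of "{1..N}"]) (use finj sosc wW that in \<open>auto simp: SOSC_with_def\<close>)
    moreover have "g w ` A \<subseteq> word_map f w ` U" "g w' ` A \<subseteq> word_map f w' ` U"
      using \<sigma>_U by (auto simp: g_def)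
    ultimately show ?thesis by blast
  qed
  have cpt: "compact (g w ` A)" if "w \<in> W" for w
    using A(1) gcont[OF that] by (intro compact_continuous_image) (auto intro: continuous_on_subset)
  define Pairs where "Pairs = {(w, w'). w \<in> W \<and> w' \<in> W \<and> w \<noteq> w'}"
  have finPairs: "finite Pairs"
  proof (rule finite_subset)
    show "Pairs \<subseteq> W \<times> W" by (auto simp: Pairs_def)
    show "finite (W \<times> W)" using finW by simp
  qed
  have "\<forall>q\<in>Pairs. \<exists>d>0. \<forall>x\<in>g (fst q) ` A. \<forall>y\<in>g (snd q) ` A. d \<le> dist x y"
  proof
    fix q assume "q \<in> Pairs"
    then obtain w w' where q: "q = (w, w')" "w \<in> W" "w' \<in> W" "w \<noteq> w'" by (auto simp: Pairs_def)
    show "\<exists>d>0. \<forall>x\<in>g (fst q) ` A. \<forall>y\<in>g (snd q) ` A. d \<le> dist x y"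
      using separate_compact_closed[OF cpt[OF q(2)] compact_imp_closed[OF cpt[OF q(3)]] disjA[OF q(2-4)]] q(1) by simp
  qed
  then obtain Dd where Dd: "\<And>q. q \<in> Pairs \<Longrightarrow> Dd q > 0 \<and> (\<forall>x\<in>g (fst q) ` A. \<forall>y\<in>g (snd q) ` A. Dd q \<le> dist x y)"
    by metis
  have Pairs_ne: "Pairs \<noteq> {}"
  proof -
    obtain w where w: "w \<in> W" using cardW by fastforce
    have "W - {w} \<noteq> {}"
    proof
      assume "W - {w} = {}"
      then have "W \<subseteq> {w}" by auto
      then have "card W \<le> 1" using card_mono[of "{w}" W] by simp
      with cardW show False by simp
    qed
    then obtain w' where "w' \<in> W" "w' \<noteq> w" by auto
    then have "(w', w) \<in> Pairs" using w by (auto simp: Pairs_def)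
    then show ?thesis by auto
  qed
  define \<delta> where "\<delta> = Min (Dd ` Pairs)"
  have \<delta>pos: "\<delta> > 0" unfolding \<delta>_def using finPairs Pairs_ne Dd by (subst Min_gr_iff) auto
  have sep: "\<delta> \<le> dist (g i x) (g j y)" if "i \<in> W" "j \<in> W" "i \<noteq> j" "x \<in> A" "y \<in> A" for i j x y
  proof -
    have q: "(i, j) \<in> Pairs" using that by (simp add: Pairs_def)
    have "\<delta> \<le> Dd (i, j)" unfolding \<delta>_def using finPairs q by (intro Min_le) auto
    also have "\<dots> \<le> dist (g i x) (g j y)" using Dd[OF q] that by auto
    finally show ?thesis .
  qed
  define L where "L = Max (Lc ` W)"
  have Wne: "W \<noteq> {}" using cardW by auto
  have L: "0 < L" "L < 1" unfolding L_def using finW Wne Lc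
    by (auto simp: Max_gr_iff Max_less_iff)
  have LipL: "dist (g w x) (g w y) \<le> L * dist x y" if "w \<in> W" for w x y
  proof -
    have "Lc w \<le> L" unfolding L_def using finW that by (intro Max_ge) auto
    then show ?thesis using Lup[OF that, of x y] by (meson dual_order.trans mult_right_mono zero_le_dist)
  qed
  have AE_A: "AE x in \<mu>. x \<in> A"
    by (rule concentrated[OF prob sets\<mu> finW eqm _ Psum A gA L LipL]) (use Ppos in \<open>auto simp: less_imp_le\<close>)
  have gmeas: "g w \<in> measurable \<mu> \<mu>" if "w \<in> W" for w
  proof -
    have "g w \<in> borel_measurable borel" by (rule borel_measurable_continuous_onI[OF gcont[OF that]])
    then show ?thesis using measurable_cong_sets[OF sets\<mu> sets\<mu>] by simp
  qed
  have invint: "(\<integral>\<^sup>+x. u x \<partial>\<mu>) = (\<Sum>w\<in>W. ennreal (P w) * (\<integral>\<^sup>+x. u (g w x) \<partial>\<mu>))"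
    if u: "u \<in> borel_measurable borel" for u
  proof (rule inv_integral[OF finW gmeas])
    fix B assume "B \<in> sets \<mu>"
    then show "emeasure \<mu> B = (\<Sum>w\<in>W. ennreal (P w) * emeasure \<mu> (g w -` B \<inter> space \<mu>))"
      using eqm sets\<mu> space\<mu> by simp
  next
    show "u \<in> borel_measurable \<mu>" using u by (simp add: measurable_cong_sets[OF sets\<mu> refl])
  qed
  have "\<exists>C>0. \<forall>\<alpha>. finite \<alpha> \<longrightarrow> \<alpha> \<noteq> {} \<longrightarrow>
     ennreal (C * real (card \<alpha>) powr (- (r / k))) \<le> (\<integral>\<^sup>+x. ennreal (Min ((\<lambda>a. norm (x - a) powr r) ` \<alpha>)) \<partial>\<mu>)"
    by (rule core[OF prob AE_A invint finW cardW gcont gA Slow _ Ppos \<delta>pos sep r_pos k_pos keq]) (use Spos in auto)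
  then obtain C where Cpos: "C > 0" and Cbound: "\<And>\<alpha>. finite \<alpha> \<Longrightarrow> \<alpha> \<noteq> {} \<Longrightarrow>
     ennreal (C * real (card \<alpha>) powr (- (r / k))) \<le> (\<integral>\<^sup>+x. ennreal (Min ((\<lambda>a. norm (x - a) powr r) ` \<alpha>)) \<partial>\<mu>)"
    by blast
  define e where "e = r / k"
  have Vlow: "ennreal (C * real n powr (- e)) \<le> quant_V n r \<mu>" if n: "n \<ge> 1" for n
    unfolding quant_V_def
  proof (rule INF_greatest)
    fix \<alpha> :: "'a set" assume "\<alpha> \<in> {A. finite A \<and> A \<noteq> {} \<and> card A \<le> n}"
    then have a: "finite \<alpha>" "\<alpha> \<noteq> {}" "card \<alpha> \<le> n" by auto
    have "1 \<le> card \<alpha>" using a by (simp add: Suc_le_eq card_gt_0_iff)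
    then have "real n powr (- e) \<le> real (card \<alpha>) powr (- e)"
      using a(3) r_pos k_pos by (intro powr_mono2') (auto simp: e_def)
    then have "C * real n powr (- e) \<le> C * real (card \<alpha>) powr (- e)" using Cpos by simp
    then have "ennreal (C * real n powr (- e)) \<le> ennreal (C * real (card \<alpha>) powr (- (r / k)))"
      by (simp add: e_def ennreal_leI)
    also have "\<dots> \<le> (\<integral>\<^sup>+x. ennreal (Min ((\<lambda>a. norm (x - a) powr r) ` \<alpha>)) \<partial>\<mu>)" by (rule Cbound[OF a(1,2)])
    finally show "ennreal (C * real n powr (- e)) \<le> (\<integral>\<^sup>+x. ennreal (Min ((\<lambda>a. norm (x - a) powr r) ` \<alpha>)) \<partial>\<mu>)" .
  qed
  have Vup: "quant_V n r \<mu> \<le> ennreal (\<epsilon> powr r)"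
    if F: "finite F" "F \<noteq> {}" "card F \<le> n" and cov: "\<And>x. x \<in> A \<Longrightarrow> \<exists>a\<in>F. norm (x - a) \<le> \<epsilon>"
    for n F \<epsilon>
  proof -
    have "quant_V n r \<mu> \<le> (\<integral>\<^sup>+x. ennreal (Min ((\<lambda>a. norm (x - a) powr r) ` F)) \<partial>\<mu>)"
      unfolding quant_V_def using F by (intro INF_lower) auto
    also have "\<dots> \<le> (\<integral>\<^sup>+x. ennreal (\<epsilon> powr r) \<partial>\<mu>)"
    proof (rule nn_integral_mono_AE)
      show "AE x in \<mu>. ennreal (Min ((\<lambda>a. norm (x - a) powr r) ` F)) \<le> ennreal (\<epsilon> powr r)"
        using AE_A
      proof eventually_elim
        case (elim x)
        then obtain a where a: "a \<in> F" "norm (x - a) \<le> \<epsilon>" using cov by blast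
        have "Min ((\<lambda>a. norm (x - a) powr r) ` F) \<le> norm (x - a) powr r"
          using F a by (intro Min_le) auto
        also have "\<dots> \<le> \<epsilon> powr r" using a r_pos by (intro powr_mono2) auto
        finally show ?case by (rule ennreal_leI)
      qed
    qed
    also have "\<dots> = ennreal (\<epsilon> powr r)" using prob_space.emeasure_space_1[OF prob] by simp
    finally show ?thesis .
  qed
  obtain R where R: "\<And>x. x \<in> A \<Longrightarrow> norm x \<le> R"
    using compact_imp_bounded[OF A(1)] by (auto simp: bounded_iff)
  obtain a0 where a0: "a0 \<in> A" using A(2) by auto
  have Vfin: "quant_V n r \<mu> < top" if "n \<ge> 1" for n
  proof -
    have "quant_V n r \<mu> \<le> ennreal ((2 * R) powr r)"
    proof (rule Vup[of "{a0}"])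
      show "card {a0} \<le> n" using that by simp
      fix x assume "x \<in> A"
      then have "norm (x - a0) \<le> 2 * R" using R[of x] R[OF a0] norm_triangle_ineq4[of x a0] by simp
      then show "\<exists>a\<in>{a0}. norm (x - a) \<le> 2 * R" by simp
    qed auto
    then show ?thesis using order.strict_trans1 by fastforce
  qed
  obtain F where F: "F \<subseteq> A" "finite F" "A \<subseteq> (\<Union>a\<in>F. ball a (1/2))"
  proof (rule compactE_image[OF A(1), of A "\<lambda>a. ball a (1/2)"])
    show "A \<subseteq> (\<Union>a\<in>A. ball a (1/2))" by force
  qed auto
  have Fne: "F \<noteq> {}" using F(3) A(2) by auto
  have Vhalf: "quant_V n r \<mu> \<le> ennreal ((1/2) powr r)" if "n \<ge> card F" for n
  proof (rule Vup[OF F(2) Fne that])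
    fix x assume "x \<in> A"
    then obtain a where "a \<in> F" "dist a x < 1/2" using F(3) by auto
    then show "\<exists>a\<in>F. norm (x - a) \<le> 1/2" by (auto simp: dist_norm norm_minus_commute intro!: bexI[of _ a])
  qed
  define c0 where "c0 = C powr (1 / r)"
  have c0pos: "c0 > 0" using Cpos by (simp add: c0_def)
  have elow: "c0 * real n powr (- (1 / k)) \<le> quant_e n r \<mu>" if n: "n \<ge> 1" for n
  proof -
    have "C * real n powr (- e) \<le> enn2real (quant_V n r \<mu>)"
      using enn2real_mono[OF Vlow[OF n] Vfin[OF n]] Cpos by simp
    then have "(C * real n powr (- e)) powr (1 / r) \<le> enn2real (quant_V n r \<mu>) powr (1 / r)"
      using Cpos r_pos by (intro powr_mono2) auto
    moreover have "(C * real n powr (- e)) powr (1 / r) = c0 * real n powr (- (1 / k))"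
    proof -
      have "(C * real n powr (- e)) powr (1 / r) = C powr (1 / r) * (real n powr (- e)) powr (1 / r)"
        using Cpos by (simp add: powr_mult)
      also have "(real n powr (- e)) powr (1 / r) = real n powr (- (1 / k))"
        using r_pos k_pos by (simp add: powr_powr e_def)
      finally show ?thesis by (simp add: c0_def)
    qed
    ultimately show ?thesis by (simp add: quant_e_def)
  qed
  have ehalf: "quant_e n r \<mu> \<le> 1/2" if "n \<ge> card F" for n
  proof -
    have "enn2real (quant_V n r \<mu>) \<le> (1/2) powr r"
      by (rule enn2real_leI[OF _ Vhalf[OF that]]) simp
    then have "enn2real (quant_V n r \<mu>) powr (1 / r) \<le> ((1/2) powr r) powr (1 / r)"
      using r_pos by (intro powr_mono2) auto
    also have "\<dots> = 1/2" using r_pos by (simp add: powr_powr)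
    finally show ?thesis by (simp add: quant_e_def)
  qed
  have part1: "liminf (\<lambda>n. ereal (real n * quant_e n r \<mu> powr l0)) > 0" if l0: "0 < l0" "l0 < k" for l0
  proof -
    have "ereal (c0 powr l0) \<le> liminf (\<lambda>n. ereal (real n * quant_e n r \<mu> powr l0))"
    proof (rule Liminf_bounded)
      show "\<forall>\<^sub>F n in sequentially. ereal (c0 powr l0) \<le> ereal (real n * quant_e n r \<mu> powr l0)"
        using eventually_ge_at_top[of 1]
      proof eventually_elim
        case (elim n)
        have npos: "real n > 0" using elim by simp
        have "(c0 * real n powr (- (1 / k))) powr l0 \<le> quant_e n r \<mu> powr l0"
          using elow[OF elim] l0 c0pos by (intro powr_mono2) auto
        moreover have "(c0 * real n powr (- (1 / k))) powr l0 = c0 powr l0 * real n powr (- (l0 / k))"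
          using c0pos by (simp add: powr_mult powr_powr)
        ultimately have le1: "c0 powr l0 * real n powr (- (l0 / k)) \<le> quant_e n r \<mu> powr l0" by simp
        have "real n powr (1 + - (l0 / k)) = real n powr 1 * real n powr (- (l0 / k))" by (rule powr_add)
        moreover have "real n powr 1 = real n" using npos by simp
        moreover have "1 \<le> real n powr (1 + - (l0 / k))"
          using elim l0 k_pos by (intro ge_one_powr_ge_zero) auto
        ultimately have ge1: "1 \<le> real n * real n powr (- (l0 / k))" by simp
        have "c0 powr l0 \<le> c0 powr l0 * (real n * real n powr (- (l0 / k)))"
          using ge1 by (simp add: mult_le_cancel_left1)
        also have "\<dots> = real n * (c0 powr l0 * real n powr (- (l0 / k)))" by (simp add: mult_ac)
        also have "\<dots> \<le> real n * quant_e n r \<mu> powr l0" using le1 by (intro mult_left_mono) auto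
        finally show ?case by simp
      qed
    qed
    moreover have "0 < ereal (c0 powr l0)" using c0pos by simp
    ultimately show ?thesis by (rule order.strict_trans2[rotated])
  qed
  have part2: "ereal k \<le> lower_quant_dim r \<mu>"
    unfolding lower_quant_dim_def
  proof (subst le_Liminf_iff, intro allI impI)
    fix y :: ereal assume y: "y < ereal k"
    obtain l where l: "y < ereal l" "0 < l" "l < k"
    proof (cases y)
      case (real y0)
      then have y0: "y0 < k" using y by simp
      define l0 where "l0 = (max y0 0 + k) / 2"
      have "y0 < l0" "0 < l0" "l0 < k" using y0 k_pos unfolding l0_def by (cases "y0 \<le> 0"; simp add: max_def)+
      then show ?thesis using that[of l0] real by simp
    next
      case PInf then show ?thesis using y by simp
    next
      case MInf then show ?thesis using that[of "k/2"] k_pos by simp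
    qed
    define M where "M = (- l * ln c0) / (1 - l / k)"
    obtain N0 :: nat where N0: "exp M < real N0" using reals_Archimedean2 by blast
    have "\<forall>\<^sub>F n in sequentially. ereal l < ereal (ln (real n) / (- ln (quant_e n r \<mu>)))"
      using eventually_ge_at_top[of "max (max 1 (card F)) N0"]
    proof eventually_elim
      case (elim n)
      then have n1: "n \<ge> 1" "n \<ge> card F" "real n > exp M" using N0 by auto
      define q where "q = quant_e n r \<mu>"
      have qlow: "c0 * real n powr (- (1 / k)) \<le> q" using elow[OF n1(1)] by (simp add: q_def)
      have "0 < c0 * real n powr (- (1 / k))" using c0pos n1(1) by simp
      then have qpos: "0 < q" using qlow by linarith
      have qlt: "q < 1" using ehalf[OF n1(2)] by (simp add: q_def)
      have "ln (c0 * real n powr (- (1 / k))) \<le> ln q"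
        using qlow qpos c0pos n1(1) by (subst ln_le_cancel_iff) auto
      moreover have "ln (c0 * real n powr (- (1 / k))) = ln c0 - ln (real n) / k"
        using c0pos n1(1) by (simp add: ln_mult)
      ultimately have lnq: "- ln q \<le> ln (real n) / k - ln c0" by simp
      have ypos: "0 < - ln q" using qpos qlt by simp
      have "M < ln (real n)"
        using n1 ln_less_cancel_iff[of "exp M" "real n"] by simp
      then have h1: "(1 - l / k) * M < (1 - l / k) * ln (real n)"
        using l k_pos by (intro mult_strict_left_mono) auto
      have h2: "(1 - l / k) * M = - l * ln c0"
      proof -
        have "1 - l / k \<noteq> 0" using l k_pos by simp
        then show ?thesis unfolding M_def by simp
      qed
      have h3: "l * (ln (real n) / k - ln c0) = (l / k) * ln (real n) - l * ln c0"
        by (simp add: algebra_simps)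
      have h4: "(1 - l / k) * ln (real n) = ln (real n) - (l / k) * ln (real n)"
        by (simp add: algebra_simps)
      have "- (l * ln c0) < ln (real n) - (l / k) * ln (real n)" using h1 unfolding h2 h4 by simp
      then have "l * (ln (real n) / k - ln c0) < ln (real n)" unfolding h3 by simp
      moreover have "l * (- ln q) \<le> l * (ln (real n) / k - ln c0)"
        using lnq l by (intro mult_left_mono) auto
      ultimately have "l * (- ln q) < ln (real n)" by linarith
      then have "l < ln (real n) / (- ln q)" by (simp only: pos_less_divide_eq[OF ypos])
      then show ?case by (simp add: q_def)
    qed
    then show "\<forall>\<^sub>F n in sequentially. y < ereal (ln (real n) / (- ln (quant_e n r \<mu>)))"
      by eventually_elim (rule less_trans[OF l(1)])
  qed
  show ?thesis using part1 part2 by blast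
qed

end
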